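(* Let $r>0$, let $(w_x,w_y)\in\mathbb{R}^2$ with $v_w=\sqrt{w_x^2+w_y^2}\in(0,1)$, and let $(x_f,y_f,\theta_f)$ be any goal pose with $(x_f,y_f)\in\mathbb{R}^2$ and $\theta_f\in[0,2\pi)$. Then there exists a $4\pi$-arc $LSL$ path that reaches the goal pose $(x_f,y_f,\theta_f)$ from the start pose $(0,0,0)$, and there also exists a $4\pi$-arc $RSR$ path that reaches it. That is, each of the two path types individually provides full reachability.
   Context: Setting: a vehicle moves in the plane at unit speed with minimum turning radius $r>0$, in a steady current of velocity $(w_x,w_y)$ whose speed is $v_w=\sqrt{w_x^2+w_y^2}$. It is assumed throughout that $0<v_w<1$. The start pose is $(0,0,0)$ and a goal pose is $(x_f,y_f,\theta_f)$ with $\theta_f\in[0,2\pi)$. $LSL$ paths: such a path has parameters $(\alpha,\beta,\gamma)$ with $\alpha,\gamma\ge 0$ and $\beta\ge0$. It consists of a maximal-curvature left arc of turning angle $\alpha$, then a straight segment of length $\beta$, then a left arc of turning angle $\gamma$, all traversed in the frame moving with the current. Its travel time is $T=r(\alpha+\gamma)+\beta$. It reaches the goal pose iff there is $k\in\mathbb{Z}$ such that $\alpha+\gamma=2k\pi+\theta_f$, $x_f-w_xT=r\sin\theta_f+\beta\cos\alpha$, and $y_f-w_yT=r(1-\cos\theta_f)+\beta\sin\alpha$. $RSR$ paths: such a path has parameters $(\alpha,\beta,\gamma)$ with $\alpha,\gamma\ge0$ and $\beta\ge 0$, right arcs, and travel time $T=r(\alpha+\gamma)+\beta$. It reaches the goal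 pose iff there is $k\in\mathbb{Z}$ such that $-\alpha-\gamma=2k\pi+\theta_f$, $x_f-w_xT=-r\sin\theta_f+\beta\cos\alpha$, and $y_f-w_yT=-r(1-\cos\theta_f)-\beta\sin\alpha$. Arc-range classes: an $LSL$ or $RSR$ path is called a $2\pi$-arc path if $\alpha,\gamma\in[0,2\pi)$, and a $4\pi$-arc path if $\alpha,\gamma\in[0,4\pi)$. *)

theory Defs
  imports Complex_Main
begin

definition travel_time :: "real \<Rightarrow> real \<Rightarrow> real \<Rightarrow> real \<Rightarrow> real" where
  "travel_time r \<alpha> \<beta> \<gamma> = r * (\<alpha> + \<gamma>) + \<beta>"

definition LSL_reaches ::
  "real \<Rightarrow> real \<Rightarrow> real \<Rightarrow> real \<Rightarrow> real \<Rightarrow> real \<Rightarrow> real \<Rightarrow> real \<Rightarrow> real \<Rightarrow> bool" where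
  "LSL_reaches r wx wy xf yf thf \<alpha> \<beta> \<gamma> \<longleftrightarrow>
     \<alpha> \<ge> 0 \<and> \<beta> \<ge> 0 \<and> \<gamma> \<ge> 0 \<and>
     (\<exists>k::int. \<alpha> + \<gamma> = 2 * real_of_int k * pi + thf \<and>
        xf - wx * travel_time r \<alpha> \<beta> \<gamma> = r * sin thf + \<beta> * cos \<alpha> \<and>
        yf - wy * travel_time r \<alpha> \<beta> \<gamma> = r * (1 - cos thf) + \<beta> * sin \<alpha>)"

definition RSR_reaches ::
  "real \<Rightarrow> real \<Rightarrow> real \<Rightarrow> real \<Rightarrow> real \<Rightarrow> real \<Rightarrow> real \<Rightarrow> real \<Rightarrow> real \<Rightarrow> bool" where
  "RSR_reaches r wx wy xf yf thf \<alpha> \<beta> \<gamma> \<longleftrightarrow>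
     \<alpha> \<ge> 0 \<and> \<beta> \<ge> 0 \<and> \<gamma> \<ge> 0 \<and>
     (\<exists>k::int. - \<alpha> - \<gamma> = 2 * real_of_int k * pi + thf \<and>
        xf - wx * travel_time r \<alpha> \<beta> \<gamma> = - r * sin thf + \<beta> * cos \<alpha> \<and>
        yf - wy * travel_time r \<alpha> \<beta> \<gamma> = - r * (1 - cos thf) - \<beta> * sin \<alpha>)"

definition four_pi_arc :: "real \<Rightarrow> real \<Rightarrow> bool" where
  "four_pi_arc \<alpha> \<gamma> \<longleftrightarrow> \<alpha> \<in> {0..<4*pi} \<and> \<gamma> \<in> {0..<4*pi}"

end

theory Submission
  imports Defs
begin

lemma quad_root:
  fixes px py wx wy :: real
  assumes "wx^2 + wy^2 < 1"
  shows "\<exists>\<beta>\<ge>0. (px - \<beta>*wx)^2 + (py - \<beta>*wy)^2 = \<beta>^2"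
proof -
  define c where "c = 1 - (wx^2 + wy^2)"
  define b where "b = px*wx + py*wy"
  define d where "d = px^2 + py^2"
  define s where "s = sqrt (b^2 + c*d)"
  have c: "c > 0" using assms c_def by simp
  have d: "d \<ge> 0" unfolding d_def by simp
  have s2: "s^2 = b^2 + c*d" unfolding s_def using c d by simp
  have sb: "s \<ge> \<bar>b\<bar>" unfolding s_def
    by (metis c d abs_ge_zero le_add_same_cancel1 mult_nonneg_nonneg order_less_imp_le real_sqrt_abs real_sqrt_le_mono zero_le_power2)
  define \<beta> where "\<beta> = (s - b)/c"
  have b0: "\<beta> \<ge> 0" unfolding \<beta>_def using c sb by simp
  have cb: "c*\<beta> = s - b" unfolding \<beta>_def using c by simp
  have "c*(c*\<beta>^2 + 2*b*\<beta> - d) = (c*\<beta>)^2 + 2*b*(c*\<beta>) - c*d"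
    by (simp add: algebra_simps power2_eq_square)
  also have "\<dots> = 0" unfolding cb using s2 by (simp add: algebra_simps power2_eq_square)
  finally have "c*\<beta>^2 + 2*b*\<beta> - d = 0" using c by simp
  hence "(px - \<beta>*wx)^2 + (py - \<beta>*wy)^2 = \<beta>^2"
    unfolding c_def b_def d_def by (simp add: algebra_simps power2_eq_square)
  thus ?thesis using b0 by blast
qed

lemma angle_ex:
  fixes a b \<beta> :: real
  assumes "\<beta> \<ge> 0" "a^2 + b^2 = \<beta>^2"
  shows "\<exists>t. 0 < t \<and> t \<le> 2*pi \<and> a = \<beta> * cos t \<and> b = \<beta> * sin t"
        "\<exists>t. 0 \<le> t \<and> t < 2*pi \<and> a = \<beta> * cos t \<and> b = \<beta> * sin t"
proof -
  have "\<exists>t. 0 \<le> t \<and> t < 2*pi \<and> a = \<beta> * cos t \<and> b = \<beta> * sin t"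
  proof (cases "\<beta> = 0")
    case True
    then have "a = 0" "b = 0" using assms by (auto simp: power2_eq_square)
    then show ?thesis using True by (intro exI[of _ 0]) simp
  next
    case False
    then have "(a/\<beta>)^2 + (b/\<beta>)^2 = 1" using assms by (simp add: power_divide add_divide_distrib[symmetric])
    then obtain t where "0 \<le> t" "t < 2*pi" "a/\<beta> = cos t" "b/\<beta> = sin t" by (rule sincos_total_2pi)
    then show ?thesis using False by (intro exI[of _ t]) (auto simp: field_simps)
  qed
  then show "\<exists>t. 0 \<le> t \<and> t < 2*pi \<and> a = \<beta> * cos t \<and> b = \<beta> * sin t" .
  then obtain t where t: "0 \<le> t" "t < 2*pi" "a = \<beta> * cos t" "b = \<beta> * sin t" by blast
  show "\<exists>t. 0 < t \<and> t \<le> 2*pi \<and> a = \<beta> * cos t \<and> b = \<beta> * sin t"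
  proof (cases "t = 0")
    case True then show ?thesis using t by (intro exI[of _ "2*pi"]) simp
  next
    case False then show ?thesis using t by (intro exI[of _ t]) simp
  qed
qed

theorem theorem1:
  fixes r wx wy xf yf thf :: real
  assumes "r > 0"
    and "0 < sqrt (wx^2 + wy^2)" and "sqrt (wx^2 + wy^2) < 1"
    and "0 \<le> thf" and "thf < 2 * pi"
  shows "(\<exists>\<alpha> \<beta> \<gamma>. four_pi_arc \<alpha> \<gamma> \<and> LSL_reaches r wx wy xf yf thf \<alpha> \<beta> \<gamma>) \<and>
         (\<exists>\<alpha> \<beta> \<gamma>. four_pi_arc \<alpha> \<gamma> \<and> RSR_reaches r wx wy xf yf thf \<alpha> \<beta> \<gamma>)"
proof
  have w: "wx^2 + wy^2 < 1" using assms(3)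
    by (metis real_sqrt_lt_1_iff)
  show "\<exists>\<alpha> \<beta> \<gamma>. four_pi_arc \<alpha> \<gamma> \<and> LSL_reaches r wx wy xf yf thf \<alpha> \<beta> \<gamma>"
  proof -
    define S where "S = thf + 2*pi"
    define px where "px = xf - r * sin thf - wx*r*S"
    define py where "py = yf - r * (1 - cos thf) - wy*r*S"
    obtain \<beta> where b: "\<beta> \<ge> 0" "(px - \<beta>*wx)^2 + (py - \<beta>*wy)^2 = \<beta>^2"
      using quad_root[OF w] by blast
    obtain t where t: "0 \<le> t" "t < 2*pi" "px - \<beta>*wx = \<beta> * cos t" "py - \<beta>*wy = \<beta> * sin t"
      using angle_ex(2)[OF b] by blast
    have "four_pi_arc t (S - t)" unfolding four_pi_arc_def S_def using t assms by auto
    moreover have "LSL_reaches r wx wy xf yf thf t \<beta> (S - t)"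
      unfolding LSL_reaches_def travel_time_def
      using t b assms
      apply (intro conjI exI[of _ 1])
      apply (auto simp: S_def)
       apply (insert t(3), simp add: px_def S_def algebra_simps)
      apply (insert t(4), simp add: py_def S_def algebra_simps)
      done
    ultimately show ?thesis by blast
  qed
  show "\<exists>\<alpha> \<beta> \<gamma>. four_pi_arc \<alpha> \<gamma> \<and> RSR_reaches r wx wy xf yf thf \<alpha> \<beta> \<gamma>"
  proof -
    define S where "S = 4*pi - thf"
    define px where "px = xf + r * sin thf - wx*r*S"
    define py where "py = yf + r * (1 - cos thf) - wy*r*S"
    obtain \<beta> where b: "\<beta> \<ge> 0" "(px - \<beta>*wx)^2 + (-(py - \<beta>*wy))^2 = \<beta>^2"
      using quad_root[OF w, of px py] by (auto simp: power2_commute)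
    obtain t where t: "0 < t" "t \<le> 2*pi" "px - \<beta>*wx = \<beta> * cos t" "-(py - \<beta>*wy) = \<beta> * sin t"
      using angle_ex(1)[OF b] by blast
    have "four_pi_arc t (S - t)" unfolding four_pi_arc_def S_def using t assms by auto
    moreover have "RSR_reaches r wx wy xf yf thf t \<beta> (S - t)"
      unfolding RSR_reaches_def travel_time_def
      using t b assms
      apply (intro conjI exI[of _ "-2"])
      apply (auto simp: S_def)
       apply (insert t(3), simp add: px_def S_def algebra_simps)
      apply (insert t(4), simp add: py_def S_def algebra_simps)
      done
    ultimately show ?thesis by blast
  qed
qed

end
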